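(* Let $k\ge2$, $p\in[0,1]$, and consider the random complex $Y^k(n,p)$. For every $(k-2)$-face $H\in\binom{[n]}{k-1}$, the random graph $\mathrm{lk}(H,Y^k(n,p))$ (on vertex set $[n]\setminus H$) has the distribution of the binomial random graph $G(n-k+1,p/2)$.
   Context: $Y^k(n,p)$ is the random $k$-dimensional complex on vertex set $[n]$ with complete $(k-1)$-skeleton (all subsets of size at most $k$ are faces) constructed as follows: choose $a:\binom{[n]}{k}\to\mathbb Z_2$ with the values $a(F)$ independent and uniform; call $H\in\binom{[n]}{k+1}$ good if $H$ contains an even number of $k$-subsets $F$ with $a(F)=1$; each good $H$ is added as a $k$-face independently with probability $p$. The link $\mathrm{lk}(H,Y)$ of $H\in\binom{[n]}{k-1}$ is the graph on $[n]\setminus H$ with edges $e$ such that $H\cup e$ is a $k$-face. $G(m,q)$ is the random graph on $m$ vertices with each edge present independently with probability $q$. *)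

theory Defs
  imports "HOL-Probability.Probability"
begin

definition subsets_of_size :: "nat set \<Rightarrow> nat \<Rightarrow> nat set set" where
  "subsets_of_size V j = {S. S \<subseteq> V \<and> card S = j}"

text \<open>A (k+1)-set H is good for a labelling a (a F = True meaning a(F)=1)
  if it contains an even number of k-subsets F with a F = 1.\<close>
definition good :: "nat \<Rightarrow> (nat set \<Rightarrow> bool) \<Rightarrow> nat set \<Rightarrow> bool" where
  "good k a H \<longleftrightarrow> even (card {F. F \<subseteq> H \<and> card F = k \<and> a F})"

text \<open>Distribution of the set of k-faces of Y^k(n,p) on vertex set [n] = {1..n}
  (the (k-1)-skeleton is complete and deterministic).\<close>
definition Y_faces :: "nat \<Rightarrow> nat \<Rightarrow> real \<Rightarrow> nat set set pmf" where
  "Y_faces n k p =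
     do {
       a \<leftarrow> Pi_pmf (subsets_of_size {1..n} k) False (\<lambda>_. pmf_of_set (UNIV :: bool set));
       c \<leftarrow> Pi_pmf (subsets_of_size {1..n} (k+1)) False (\<lambda>_. bernoulli_pmf p);
       return_pmf {H \<in> subsets_of_size {1..n} (k+1). good k a H \<and> c H}
     }"

definition link :: "nat \<Rightarrow> nat set \<Rightarrow> nat set set \<Rightarrow> nat set set" where
  "link n H faces = {e \<in> subsets_of_size ({1..n} - H) 2. H \<union> e \<in> faces}"

definition G_rand :: "nat set \<Rightarrow> real \<Rightarrow> nat set set pmf" where
  "G_rand V q = map_pmf (\<lambda>c. {e \<in> subsets_of_size V 2. c e})
                   (Pi_pmf (subsets_of_size V 2) False (\<lambda>_. bernoulli_pmf q))"

end

theory Submission imports Defs begin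

abbreviation "U \<equiv> pmf_of_set (UNIV :: bool set)"

lemma bind_half:
  assumes "0 \<le> p" "p \<le> 1"
  shows "bind_pmf U (\<lambda>b. if b then bernoulli_pmf p else return_pmf False) = bernoulli_pmf (p/2)"
proof (rule pmf_eqI)
  fix x :: bool
  show "pmf (bind_pmf U (\<lambda>b. if b then bernoulli_pmf p else return_pmf False)) x = pmf (bernoulli_pmf (p/2)) x"
    unfolding pmf_bind
    apply (subst integral_measure_pmf[where A=UNIV])
      apply simp
     apply simp
    using assms apply (cases x; simp add: UNIV_bool pmf_of_set field_simps)
    done
qed

lemma U_xor: "map_pmf (\<lambda>y. y \<noteq> c) U = U"
proof -
  have "inj (\<lambda>y::bool. y \<noteq> c)" by (auto simp: inj_def)
  moreover have "(\<lambda>y::bool. y \<noteq> c) ` UNIV = UNIV" by (cases c) (auto simp: image_def)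
  ultimately show ?thesis by (simp add: map_pmf_of_set_inj)
qed

lemma xor_Pi:
  assumes "finite E"
  shows "map_pmf (\<lambda>h e. if e \<in> E then h e \<noteq> b e else False) (Pi_pmf E False (\<lambda>_. U)) = Pi_pmf E False (\<lambda>_. U)"
proof -
  have "Pi_pmf E False (\<lambda>_. U) = Pi_pmf E False (\<lambda>e. bind_pmf U (\<lambda>y. return_pmf (y \<noteq> b e)))"
    by (intro Pi_pmf_cong refl) (metis U_xor map_pmf_def)
  also have "\<dots> = bind_pmf (Pi_pmf E False (\<lambda>_. U)) (\<lambda>f. return_pmf (\<lambda>x. if x \<in> E then f x \<noteq> b x else False))"
    by (subst Pi_pmf_bind[where d'=False]) (simp_all add: assms)
  finally show ?thesis by (simp add: map_pmf_def)
qed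

lemma combine:
  assumes "finite E" "0 \<le> p" "p \<le> 1"
  shows "bind_pmf (Pi_pmf E False (\<lambda>_. U)) (\<lambda>g. map_pmf (\<lambda>c. {e\<in>E. g e \<and> c e}) (Pi_pmf E False (\<lambda>_. bernoulli_pmf p)))
       = map_pmf (\<lambda>c. {e\<in>E. c e}) (Pi_pmf E False (\<lambda>_. bernoulli_pmf (p/2)))"
proof -
  have "Pi_pmf E False (\<lambda>_. bernoulli_pmf (p/2)) = Pi_pmf E False (\<lambda>_. bind_pmf U (\<lambda>b. if b then bernoulli_pmf p else return_pmf False))"
    using bind_half[OF assms(2,3)] by simp
  also have "\<dots> = bind_pmf (Pi_pmf E False (\<lambda>_. U)) (\<lambda>f. Pi_pmf E False (\<lambda>x. if f x then bernoulli_pmf p else return_pmf False))"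
    by (subst Pi_pmf_bind[where d'=False]) (simp_all add: assms)
  also have "\<dots> = bind_pmf (Pi_pmf E False (\<lambda>_. U)) (\<lambda>f. Pi_pmf {x\<in>E. f x} False (\<lambda>_. bernoulli_pmf p))"
    by (simp add: Pi_pmf_if_set assms)
  also have "\<dots> = bind_pmf (Pi_pmf E False (\<lambda>_. U)) (\<lambda>f. map_pmf (\<lambda>c x. if x \<in> {x\<in>E. f x} then c x else False) (Pi_pmf E False (\<lambda>_. bernoulli_pmf p)))"
    by (subst Pi_pmf_subset[where A=E]) (auto simp: assms)
  finally have eq: "Pi_pmf E False (\<lambda>_. bernoulli_pmf (p/2)) = bind_pmf (Pi_pmf E False (\<lambda>_. U)) (\<lambda>f. map_pmf (\<lambda>c x. if x \<in> {x\<in>E. f x} then c x else False) (Pi_pmf E False (\<lambda>_. bernoulli_pmf p)))" .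
  show ?thesis
    unfolding eq map_bind_pmf pmf.map_comp o_def
    by (intro bind_pmf_cong map_pmf_cong refl) auto
qed


lemma reindex:
  assumes "finite S" "finite E" "\<phi> ` E \<subseteq> S" "inj_on \<phi> E" "z \<notin> \<phi> ` E"
  shows "map_pmf (\<lambda>c e. if e \<in> E then c (\<phi> e) else False) (Pi_pmf S False (\<lambda>_. P)) = Pi_pmf E False (\<lambda>_. P)"
proof -
  define h where "h = (\<lambda>e. if e \<in> E then \<phi> e else z)"
  have "inj_on h E" using assms(4) unfolding h_def by (auto simp: inj_on_def)
  moreover have "h ` E = \<phi> ` E" unfolding h_def by auto
  ultimately have bij: "bij_betw h E (\<phi> ` E)" by (simp add: bij_betw_def)
  have "Pi_pmf E False (\<lambda>_. P) = map_pmf (\<lambda>g. g \<circ> h) (Pi_pmf (\<phi> ` E) False (\<lambda>_. P))"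
    by (rule Pi_pmf_bij_betw[OF assms(2) bij]) (use assms(5) in \<open>auto simp: h_def\<close>)
  also have "Pi_pmf (\<phi> ` E) False (\<lambda>_. P) = map_pmf (\<lambda>f x. if x \<in> \<phi> ` E then f x else False) (Pi_pmf S False (\<lambda>_. P))"
    by (rule Pi_pmf_subset[OF assms(1,3)])
  finally show ?thesis
    by (simp add: map_pmf_comp o_def) (intro map_pmf_cong refl ext, use assms(5) in \<open>auto simp: h_def\<close>)
qed

lemma map_pair_bind: "map_pmf F (pair_pmf A B) = bind_pmf A (\<lambda>x. map_pmf (\<lambda>y. F (x, y)) B)"
  by (simp add: pair_pmf_def map_bind_pmf map_pmf_def bind_assoc_pmf bind_return_pmf)


lemma A_part:
  assumes k2: "k \<ge> 2" and Hn: "H \<subseteq> {1..n}" and cH: "card H = k - 1"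
  defines "E \<equiv> subsets_of_size ({1..n} - H) 2"
  shows "map_pmf (\<lambda>a e. if e \<in> E then good k a (H \<union> e) else False)
           (Pi_pmf (subsets_of_size {1..n} k) False (\<lambda>_. U)) = Pi_pmf E False (\<lambda>_. U)"
proof -
  define Sk where "Sk = subsets_of_size {1..n} k"
  have finH: "finite H" using Hn finite_subset by blast
  have "H \<noteq> {}" using cH k2 by auto
  then obtain h0 where h0: "h0 \<in> H" by blast
  define q where "q = (\<lambda>e. (H - {h0}) \<union> e)"
  define Q where "Q = q ` E"
  define P where "P = Sk - Q"
  have finSk: "finite Sk" unfolding Sk_def subsets_of_size_def
    by (rule finite_subset[of _ "Pow {1..n}"]) auto
  have finE: "finite E" unfolding E_def subsets_of_size_def
    by (rule finite_subset[of _ "Pow {1..n}"]) auto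
  have Ee: "e \<subseteq> {1..n}" "e \<inter> H = {}" "card e = 2" "finite e" if "e \<in> E" for e
    using that unfolding E_def subsets_of_size_def by (auto intro: card_ge_0_finite)
  have cq: "card (q e) = k" if "e \<in> E" for e
  proof -
    have "card (q e) = card (H - {h0}) + card e"
      unfolding q_def using Ee[OF that] finH by (intro card_Un_disjoint) auto
    also have "\<dots> = k" using Ee[OF that] cH h0 finH k2 by simp
    finally show ?thesis .
  qed
  have qSk: "q e \<in> Sk" if "e \<in> E" for e
    using cq[OF that] Ee[OF that] Hn unfolding Sk_def subsets_of_size_def q_def by auto
  have QSk: "Q \<subseteq> Sk" using qSk Q_def by auto
  have injq: "inj_on q E"
  proof (rule inj_onI)
    fix x y assume "x \<in> E" "y \<in> E" "q x = q y"
    then have "q x - H = q y - H" by simp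
    moreover have "q x - H = x" "q y - H = y" using Ee[OF \<open>x \<in> E\<close>] Ee[OF \<open>y \<in> E\<close>] unfolding q_def by auto
    ultimately show "x = y" by simp
  qed
  have emp: "{} \<notin> Q"
  proof
    assume "{} \<in> Q"
    then obtain e where "e \<in> E" "q e = {}" unfolding Q_def by auto
    then show False using Ee[OF \<open>e \<in> E\<close>] unfolding q_def by auto
  qed
  have h0Q: "h0 \<notin> F" if "F \<in> Q" for F
    using that Ee h0 unfolding Q_def q_def by auto
  have h0F: "h0 \<in> F" if "e \<in> E" "F \<subseteq> H \<union> e" "card F = k" "F \<noteq> q e" for e F
  proof (rule ccontr)
    assume "h0 \<notin> F"
    then have sub: "F \<subseteq> q e" using that(2) unfolding q_def by auto
    have "finite (q e)" unfolding q_def using finH Ee[OF that(1)] by auto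
    then have "F = q e" using card_subset_eq[OF _ sub] cq[OF that(1)] that(3) by simp
    then show False using that(4) by simp
  qed
  have qsub: "q e \<subseteq> H \<union> e" for e unfolding q_def by auto
  define b where "b = (\<lambda>g e. even (card {F. F \<subseteq> H \<union> e \<and> card F = k \<and> F \<noteq> q e \<and> g F}))"
  define merge where "merge = (\<lambda>(f::nat set \<Rightarrow> bool, g::nat set \<Rightarrow> bool) x. if x \<in> Q then f x else g x)"
  have key: "good k (merge (f, g)) (H \<union> e) = (f (q e) \<noteq> b g e)" if "e \<in> E" for f g e
  proof -
    define S where "S = {F. F \<subseteq> H \<union> e \<and> card F = k \<and> F \<noteq> q e \<and> g F}"
    have qeQ: "q e \<in> Q" using that Q_def by auto
    have "{F. F \<subseteq> H \<union> e \<and> card F = k \<and> merge (f, g) F} = (if f (q e) then insert (q e) S else S)"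
    proof -
      have "merge (f, g) F = g F" if "F \<subseteq> H \<union> e" "card F = k" "F \<noteq> q e" for F
        using h0F[OF \<open>e \<in> E\<close> that] h0Q unfolding merge_def by auto
      note mg = this
      show ?thesis
      proof (rule set_eqI)
        fix F
        show "F \<in> {F. F \<subseteq> H \<union> e \<and> card F = k \<and> merge (f, g) F} \<longleftrightarrow> F \<in> (if f (q e) then insert (q e) S else S)"
        proof (cases "F = q e")
          case True
          then show ?thesis using qeQ qsub[of e] cq[OF that] unfolding S_def merge_def by auto
        next
          case False
          then show ?thesis using mg[of F] unfolding S_def by auto
        qed
      qed
    qed
    moreover have "finite S" unfolding S_def
      by (rule finite_subset[of _ "Pow (H \<union> e)"]) (use finH Ee[OF that] in auto)
    moreover have "q e \<notin> S" unfolding S_def by auto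
    ultimately show ?thesis unfolding good_def b_def S_def[symmetric] by auto
  qed
  have split: "Sk = Q \<union> P" "Q \<inter> P = {}" using QSk P_def by auto
  have finQ: "finite Q" "finite P" using finSk QSk P_def finite_subset by auto
  have "Pi_pmf Sk False (\<lambda>_. U) = map_pmf merge (pair_pmf (Pi_pmf Q False (\<lambda>_. U)) (Pi_pmf P False (\<lambda>_. U)))"
    unfolding merge_def split(1) by (rule Pi_pmf_union) (use finQ split in auto)
  also have "\<dots> = map_pmf (\<lambda>(g, f). merge (f, g)) (pair_pmf (Pi_pmf P False (\<lambda>_. U)) (Pi_pmf Q False (\<lambda>_. U)))"
    by (subst pair_commute_pmf) (simp add: map_pmf_comp case_prod_beta)
  finally have decomp: "Pi_pmf Sk False (\<lambda>_. U) = bind_pmf (Pi_pmf P False (\<lambda>_. U)) (\<lambda>g. map_pmf (\<lambda>f. merge (f, g)) (Pi_pmf Q False (\<lambda>_. U)))"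
    by (simp add: map_pair_bind)
  have inner: "map_pmf (\<lambda>f. (\<lambda>a e. if e \<in> E then good k a (H \<union> e) else False) (merge (f, g))) (Pi_pmf Q False (\<lambda>_. U))
      = Pi_pmf E False (\<lambda>_. U)" for g
  proof -
    have "map_pmf (\<lambda>f. (\<lambda>a e. if e \<in> E then good k a (H \<union> e) else False) (merge (f, g))) (Pi_pmf Q False (\<lambda>_. U))
      = map_pmf (\<lambda>h e. if e \<in> E then h e \<noteq> b g e else False)
          (map_pmf (\<lambda>c e. if e \<in> E then c (q e) else False) (Pi_pmf Q False (\<lambda>_. U)))"
      by (simp add: map_pmf_comp) (intro map_pmf_cong refl ext, simp add: key)
    also have "map_pmf (\<lambda>c e. if e \<in> E then c (q e) else False) (Pi_pmf Q False (\<lambda>_. U)) = Pi_pmf E False (\<lambda>_. U)"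
      by (rule reindex[where z="{}"]) (use finQ finE injq emp Q_def in auto)
    also have "map_pmf (\<lambda>h e. if e \<in> E then h e \<noteq> b g e else False) (Pi_pmf E False (\<lambda>_. U)) = Pi_pmf E False (\<lambda>_. U)"
      by (rule xor_Pi[OF finE])
    finally show ?thesis .
  qed
  show ?thesis
    unfolding Sk_def[symmetric] decomp map_bind_pmf map_pmf_comp inner by simp
qed


theorem lemma5p1:
  fixes n k :: nat and p :: real and H :: "nat set"
  assumes "k \<ge> 2" and "0 \<le> p" and "p \<le> 1"
    and "H \<subseteq> {1..n}" and "card H = k - 1"
  shows "map_pmf (link n H) (Y_faces n k p) = G_rand ({1..n} - H) (p / 2)"
proof -
  define E where "E = subsets_of_size ({1..n} - H) 2"
  define S1 where "S1 = subsets_of_size {1..n} (k+1)"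
  define A where "A = Pi_pmf (subsets_of_size {1..n} k) False (\<lambda>_. U)"
  define C where "C = Pi_pmf S1 False (\<lambda>_. bernoulli_pmf p)"
  define G where "G = (\<lambda>a e. if e \<in> E then good k a (H \<union> e) else False)"
  define R where "R = (\<lambda>c e. if e \<in> E then c (H \<union> e) else (False::bool))"
  have finH: "finite H" using assms(4) finite_subset by blast
  have finE: "finite E" unfolding E_def subsets_of_size_def
    by (rule finite_subset[of _ "Pow {1..n}"]) auto
  have finS1: "finite S1" unfolding S1_def subsets_of_size_def
    by (rule finite_subset[of _ "Pow {1..n}"]) auto
  have Ee: "e \<subseteq> {1..n}" "e \<inter> H = {}" "card e = 2" "finite e" if "e \<in> E" for e
    using that unfolding E_def subsets_of_size_def by (auto intro: card_ge_0_finite)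
  have HeS1: "H \<union> e \<in> S1" if "e \<in> E" for e
  proof -
    have "card (H \<union> e) = card H + card e" using Ee[OF that] finH by (intro card_Un_disjoint) auto
    then have "card (H \<union> e) = k + 1" using Ee[OF that] assms by simp
    then show ?thesis using Ee[OF that] assms(4) unfolding S1_def subsets_of_size_def by auto
  qed
  have injH: "inj_on (\<lambda>e. H \<union> e) E"
  proof (rule inj_onI)
    fix x y assume "x \<in> E" "y \<in> E" "H \<union> x = H \<union> y"
    then have "(H \<union> x) - H = (H \<union> y) - H" by simp
    then show "x = y" using Ee[OF \<open>x \<in> E\<close>] Ee[OF \<open>y \<in> E\<close>] by auto
  qed
  have empH: "{} \<notin> (\<lambda>e. H \<union> e) ` E"
  proof
    assume "{} \<in> (\<lambda>e. H \<union> e) ` E"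
    then obtain e where "e \<in> E" "H \<union> e = {}" by auto
    then show False using Ee[OF \<open>e \<in> E\<close>] by auto
  qed
  have Cpart: "map_pmf R C = Pi_pmf E False (\<lambda>_. bernoulli_pmf p)"
    unfolding R_def C_def by (rule reindex[where z="{}"]) (use finS1 finE HeS1 injH empH in auto)
  have Apart: "map_pmf G A = Pi_pmf E False (\<lambda>_. U)"
    unfolding G_def A_def E_def by (rule A_part) (use assms in auto)
  have linkeq: "link n H {H' \<in> S1. good k a H' \<and> c H'} = {e \<in> E. G a e \<and> R c e}" for a c
    unfolding link_def E_def[symmetric] G_def R_def using HeS1 by auto
  have "map_pmf (link n H) (Y_faces n k p) =
      bind_pmf A (\<lambda>a. bind_pmf C (\<lambda>c. return_pmf {e \<in> E. G a e \<and> R c e}))"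
    unfolding Y_faces_def A_def[symmetric] S1_def[symmetric] C_def[symmetric]
    by (simp add: map_bind_pmf linkeq)
  also have "\<dots> = bind_pmf A (\<lambda>a. map_pmf (\<lambda>c'. {e \<in> E. G a e \<and> c' e}) (map_pmf R C))"
    by (simp only: map_pmf_comp) (simp add: map_pmf_def)
  also have "\<dots> = bind_pmf (map_pmf G A) (\<lambda>g. map_pmf (\<lambda>c'. {e \<in> E. g e \<and> c' e}) (Pi_pmf E False (\<lambda>_. bernoulli_pmf p)))"
    by (simp add: Cpart bind_map_pmf)
  also have "\<dots> = map_pmf (\<lambda>c. {e\<in>E. c e}) (Pi_pmf E False (\<lambda>_. bernoulli_pmf (p/2)))"
    unfolding Apart by (rule combine[OF finE assms(2,3)])
  also have "\<dots> = G_rand ({1..n} - H) (p / 2)"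
    unfolding G_rand_def E_def ..
  finally show ?thesis .
qed

end
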